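(* For every integer $n\ge0$, the number $2^n$ is a fixed point of every homeomorphism $h:\mathbb{N}\to\mathbb{N}$ of the Kirch space $(\mathbb{N},\tau_K)$.
   Context: $\mathbb{N}=\{1,2,\dots\}$, $\mathbb{N}_0=\{0\}\cup\mathbb{N}$. The Kirch topology $\tau_K$ on $\mathbb{N}$ is the topology generated by the base of all $a+b\mathbb{N}_0=\{a+bn:n\in\mathbb{N}_0\}$ with $a,b\in\mathbb{N}$ coprime and $b$ square-free. *)

theory Defs
  imports "HOL-Analysis.Analysis" "HOL-Computational_Algebra.Squarefree"
begin

definition arith_prog :: "nat \<Rightarrow> nat \<Rightarrow> nat set" where
  "arith_prog a b = {a + b * n | n. True}"

definition kirch_base :: "nat set set" where
  "kirch_base = {arith_prog a b | a b. 0 < a \<and> 0 < b \<and> coprime a b \<and> squarefree b}"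

text \<open>The Kirch topology on N = {1,2,...}: topology generated by kirch_base;
  its carrier is the union of the base, i.e. {1..}.\<close>
definition kirch_topology :: "nat topology" where
  "kirch_topology = topology_generated_by kirch_base"

end

theory Submission
  imports Defs
begin


lemma topspace_kirch: "topspace kirch_topology = {n. 0 < n}"
proof -
  have "\<Union>kirch_base = {n. 0 < n}"
  proof
    show "\<Union>kirch_base \<subseteq> {n. 0 < n}"
      unfolding kirch_base_def arith_prog_def by auto
    show "{n::nat. 0 < n} \<subseteq> \<Union>kirch_base"
    proof
      fix n :: nat assume "n \<in> {n. 0 < n}"
      then have "n \<in> arith_prog n 1" unfolding arith_prog_def by auto
      moreover have "arith_prog n 1 \<in> kirch_base" unfolding kirch_base_def
        using \<open>n \<in> {n. 0 < n}\<close> by (intro CollectI exI[of _ n] exI[of _ "1::nat"]) simp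
      ultimately show "n \<in> \<Union>kirch_base" by blast
    qed
  qed
  then show ?thesis unfolding kirch_topology_def by simp
qed

lemma arith_prog_open:
  assumes "0 < a" "0 < b" "coprime a b" "squarefree b"
  shows "openin kirch_topology (arith_prog a b)"
  unfolding kirch_topology_def
  by (rule topology_generated_by_Basis) (use assms in \<open>auto simp: kirch_base_def\<close>)

lemma coprime_by_primes:
  fixes a b :: nat
  assumes "\<And>p. prime p \<Longrightarrow> p dvd a \<Longrightarrow> p dvd b \<Longrightarrow> False"
  shows "coprime a b"
proof (rule ccontr)
  assume "\<not> coprime a b"
  then have "gcd a b \<noteq> 1" by (simp add: coprime_iff_gcd_eq_1)
  then obtain p where "prime p" "p dvd gcd a b" using prime_factor_nat by blast
  then show False using assms by auto
qed

lemma squarefree_lcm_nat: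
  fixes a b :: nat
  assumes "squarefree a" "squarefree b"
  shows "squarefree (lcm a b)"
proof -
  have a0: "a \<noteq> 0" and b0: "b \<noteq> 0" using assms by (metis not_squarefree_0)+
  then have l0: "lcm a b \<noteq> 0" by (simp add: lcm_eq_0_iff)
  show ?thesis
    unfolding squarefree_factorial_semiring''[OF l0]
  proof (intro allI impI)
    fix p :: nat assume p: "prime p"
    have "multiplicity p a \<le> 1" using assms(1) p squarefree_factorial_semiring''[OF a0] by blast
    moreover have "multiplicity p b \<le> 1" using assms(2) p squarefree_factorial_semiring''[OF b0] by blast
    ultimately show "multiplicity p (lcm a b) \<le> 1"
      using multiplicity_lcm[OF a0 b0 p] by simp
  qed
qed

lemma arith_prog_sub:
  assumes "x \<in> arith_prog a b" 
  shows "arith_prog x b \<subseteq> arith_prog a b"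
  using assms unfolding arith_prog_def
  by (auto, metis add.assoc distrib_left)

lemma arith_prog_dvd_sub:
  assumes "c dvd d"
  shows "arith_prog x d \<subseteq> arith_prog x c"
proof
  fix y assume "y \<in> arith_prog x d"
  then obtain n where "y = x + d * n" unfolding arith_prog_def by auto
  moreover obtain k where "d = c * k" using assms by auto
  ultimately have "y = x + c * (k * n)" by simp
  then show "y \<in> arith_prog x c" unfolding arith_prog_def by blast
qed

lemma open_nbhd:
  assumes "openin kirch_topology U" "x \<in> U"
  shows "\<exists>b>0. coprime x b \<and> squarefree b \<and> arith_prog x b \<subseteq> U"
proof -
  have "generate_topology_on kirch_base U"
    using assms(1) unfolding kirch_topology_def by (rule openin_topology_generated_by)
  then show ?thesis using assms(2)
  proof (induction arbitrary: x)
    case Empty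
    then show ?case by simp
  next
    case (Int a c)
    then obtain b1 b2 where b1: "b1 > 0" "coprime x b1" "squarefree b1" "arith_prog x b1 \<subseteq> a"
      and b2: "b2 > 0" "coprime x b2" "squarefree b2" "arith_prog x b2 \<subseteq> c" by blast
    let ?b = "lcm b1 b2"
    have "?b > 0" using b1 b2 by (simp add: lcm_pos_nat)
    moreover have "coprime x ?b"
    proof (rule coprime_by_primes)
      fix p :: nat assume p: "prime p" "p dvd x" "p dvd ?b"
      then have "p dvd b1 * b2" using dvd_trans lcm_least[OF dvd_triv_left dvd_triv_right] by blast
      then have "p dvd b1 \<or> p dvd b2" using p(1) prime_dvd_mult_iff by blast
      then show False using p b1 b2
        by (meson coprime_common_divisor not_prime_unit)
    qed
    moreover have "squarefree ?b" using b1 b2 squarefree_lcm_nat by blast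
    moreover have "arith_prog x ?b \<subseteq> a \<inter> c"
      using b1 b2 arith_prog_dvd_sub[of b1 ?b x] arith_prog_dvd_sub[of b2 ?b x] by auto
    ultimately show ?case by blast
  next
    case (UN K)
    then obtain k where "k \<in> K" "x \<in> k" by blast
    with UN obtain b where "b>0" "coprime x b" "squarefree b" "arith_prog x b \<subseteq> k" by blast
    then show ?case using \<open>k \<in> K\<close> by blast
  next
    case (Basis s)
    then obtain a b where s: "s = arith_prog a b" "0 < a" "0 < b" "coprime a b" "squarefree b"
      unfolding kirch_base_def by blast
    then obtain n where xn: "x = a + b * n" using Basis.prems unfolding arith_prog_def by auto
    have "coprime x b"
    proof (rule coprime_by_primes)
      fix p :: nat assume p: "prime p" "p dvd x" "p dvd b"
      then have "p dvd b * n" by simp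
      then have "p dvd a" using p(2) xn by (simp add: dvd_add_left_iff)
      then show False using s(4) p by (meson coprime_common_divisor not_prime_unit)
    qed
    then show ?case using s Basis.prems arith_prog_sub by blast
  qed
qed

lemma sqf_dvd:
  fixes g m :: nat
  assumes "squarefree g" "\<And>p. prime p \<Longrightarrow> p dvd g \<Longrightarrow> p dvd m"
  shows "g dvd m"
proof (cases "m = 0")
  case True then show ?thesis by simp
next
  case False
  have g0: "g \<noteq> 0" using assms(1) by (metis not_squarefree_0)
  show ?thesis
  proof (rule multiplicity_le_imp_dvd[OF g0])
    fix p :: nat assume p: "prime p"
    show "multiplicity p g \<le> multiplicity p m"
    proof (cases "p dvd g")
      case True
      then have "p dvd m" using assms(2) p by blast
      then have "multiplicity p m \<ge> 1" using False p
        by (intro multiplicity_geI) auto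
      moreover have "multiplicity p g \<le> 1"
        using assms(1) p squarefree_factorial_semiring''[OF g0] by blast
      ultimately show ?thesis by linarith
    next
      case False
      then show ?thesis by (simp add: not_dvd_imp_multiplicity_0)
    qed
  qed
qed

lemma meet_lemma:
  fixes b d w x :: nat
  assumes "b > 0" "d > 0" "gcd b d dvd (if w \<le> x then x - w else w - x)"
  shows "\<exists>k m. w + d * k = x + b * m"
proof (cases "w \<le> x")
  case True
  then obtain q where q: "x - w = gcd b d * q" using assms(3) by auto
  obtain s t where st: "d * s = b * t + gcd d b" using bezout_nat[of d b] assms(2) by auto
  have "d * (s * q) = b * (t * q) + (x - w)"
    using st q by (metis add_mult_distrib gcd.commute mult.assoc)
  then have "w + d * (s * q) = x + b * (t * q)" using True by simp
  then show ?thesis by blast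
next
  case False
  then obtain q where q: "w - x = gcd b d * q" using assms(3) by auto
  obtain s t where st: "b * s = d * t + gcd b d" using bezout_nat[of b d] assms(1) by auto
  have "b * (s * q) = d * (t * q) + (w - x)"
    using st q by (metis add_mult_distrib mult.assoc)
  then have "w + d * (t * q) = x + b * (s * q)" using False by simp
  then show ?thesis by blast
qed

lemma closure_C1:
  assumes "w \<in> kirch_topology closure_of (arith_prog x b)" "prime r" "r dvd b"
  shows "r dvd w \<or> w mod r = x mod r"
proof (rule ccontr)
  assume H: "\<not> (r dvd w \<or> w mod r = x mod r)"
  have w0: "0 < w" using assms(1) closure_of_subset_topspace topspace_kirch by fastforce
  have "coprime w r" using H assms(2) prime_imp_coprime coprime_commute by blast
  moreover have "0 < r" using assms(2) prime_gt_0_nat by blast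
  ultimately have "openin kirch_topology (arith_prog w r)"
    using w0 assms(2) by (intro arith_prog_open) (auto simp: squarefree_prime)
  moreover have "w \<in> arith_prog w r" unfolding arith_prog_def by force
  ultimately obtain y where y: "y \<in> arith_prog x b" "y \<in> arith_prog w r"
    using assms(1) unfolding in_closure_of by blast
  obtain k where yk: "y = x + b * k" using y(1) unfolding arith_prog_def by auto
  obtain j where yj: "y = w + r * j" using y(2) unfolding arith_prog_def by auto
  obtain c where bc: "b = r * c" using assms(3) by auto
  have "y mod r = x mod r" using yk bc by (simp add: mult.assoc)
  moreover have "y mod r = w mod r" using yj by simp
  ultimately show False using H by simp
qed

lemma closure_C2:
  assumes "0 < w" "0 < b" "squarefree b"
    "\<And>q. prime q \<Longrightarrow> q dvd b \<Longrightarrow> q dvd w \<or> w mod q = x mod q"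
  shows "w \<in> kirch_topology closure_of (arith_prog x b)"
  unfolding in_closure_of
proof (intro conjI allI impI)
  show "w \<in> topspace kirch_topology" using assms(1) topspace_kirch by simp
  fix T assume T: "w \<in> T \<and> openin kirch_topology T"
  then obtain d where d: "d > 0" "coprime w d" "squarefree d" "arith_prog w d \<subseteq> T"
    using open_nbhd by blast
  have "gcd b d dvd (if w \<le> x then x - w else w - x)"
  proof (rule sqf_dvd)
    show "squarefree (gcd b d)" using assms(3) squarefree_mono by blast
    fix p :: nat assume p: "prime p" "p dvd gcd b d"
    then have "\<not> p dvd w" using d(2)
      by (meson coprime_common_divisor gcd_dvd2 dvd_trans not_prime_unit)
    then have "w mod p = x mod p" using assms(4) p by auto
    then show "p dvd (if w \<le> x then x - w else w - x)"
    proof (cases "w \<le> x")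
      case True
      then show ?thesis using mod_eq_dvd_iff_nat[OF True, of p] \<open>w mod p = x mod p\<close> by simp
    next
      case False
      then have "x \<le> w" by simp
      then show ?thesis using mod_eq_dvd_iff_nat[of x w p] \<open>w mod p = x mod p\<close> False by simp
    qed
  qed
  then obtain k m where "w + d * k = x + b * m" using meet_lemma assms(2) d(1) by blast
  moreover have "w + d * k \<in> arith_prog w d" "x + b * m \<in> arith_prog x b"
    unfolding arith_prog_def by auto
  ultimately show "\<exists>y. y \<in> arith_prog x b \<and> y \<in> T" using d(4) by auto
qed

definition Rel :: "nat topology \<Rightarrow> nat \<Rightarrow> nat \<Rightarrow> bool" where
  "Rel X x y \<longleftrightarrow> (\<forall>W. openin X W \<and> W \<noteq> {} \<longrightarrow>
     (\<exists>U V. openin X U \<and> openin X V \<and> x \<in> U \<and> y \<in> V \<and>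
        X closure_of U \<inter> X closure_of V \<subseteq> X closure_of W))"

definition Good :: "nat \<Rightarrow> nat \<Rightarrow> bool" where
  "Good x y \<longleftrightarrow> (\<forall>r. prime r \<and> odd r \<longrightarrow>
      \<not> r dvd x \<and> \<not> r dvd y \<and> \<not> int r dvd (int x - int y))"

lemma mod_eq_int_dvd:
  fixes x y q :: nat
  shows "x mod q = y mod q \<longleftrightarrow> int q dvd (int x - int y)"
proof -
  have "x mod q = y mod q \<longleftrightarrow> int (x mod q) = int (y mod q)" by simp
  also have "\<dots> \<longleftrightarrow> int x mod int q = int y mod int q" by (simp only: of_nat_mod)
  also have "\<dots> \<longleftrightarrow> int q dvd (int x - int y)" by (rule mod_eq_dvd_iff)
  finally show ?thesis .
qed


lemma Rel_hom:
  assumes h: "homeomorphic_map X X h" and x: "x \<in> topspace X" and y: "y \<in> topspace X"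
    and R: "Rel X x y"
  shows "Rel X (h x) (h y)"
  unfolding Rel_def
proof (intro allI impI)
  fix W' assume W': "openin X W' \<and> W' \<noteq> {}"
  define W where "W = {u \<in> topspace X. h u \<in> W'}"
  have cont: "continuous_map X X h" by (rule homeomorphic_imp_continuous_map[OF h])
  have surj: "h ` topspace X = topspace X" by (rule homeomorphic_imp_surjective_map[OF h])
  have inj: "inj_on h (topspace X)" by (rule homeomorphic_imp_injective_map[OF h])
  have Wo: "openin X W" unfolding W_def
    by (rule openin_continuous_map_preimage[OF cont]) (use W' in simp)
  have "W \<noteq> {}"
  proof -
    obtain z' where z': "z' \<in> W'" using W' by blast
    have "W' \<subseteq> topspace X" using W' by (simp add: openin_subset)
    then have "z' \<in> topspace X" using z' by blast
    then have "z' \<in> h ` topspace X" by (subst surj)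
    then obtain z where "z \<in> topspace X" "h z = z'" by (rule imageE) simp
    then have "z \<in> W" unfolding W_def using z' by simp
    then show ?thesis by blast
  qed
  then obtain U V where UV: "openin X U" "openin X V" "x \<in> U" "y \<in> V"
      "X closure_of U \<inter> X closure_of V \<subseteq> X closure_of W"
    using R Wo unfolding Rel_def by (elim allE[of _ W]) blast
  have Us: "U \<subseteq> topspace X" "V \<subseteq> topspace X" "W \<subseteq> topspace X"
    using openin_subset[OF UV(1)] openin_subset[OF UV(2)] openin_subset[OF Wo] by auto
  have "openin X (h ` U)" using homeomorphic_map_openness[OF h Us(1)] UV(1) by simp
  moreover have "openin X (h ` V)" using homeomorphic_map_openness[OF h Us(2)] UV(2) by simp
  moreover have "h x \<in> h ` U" "h y \<in> h ` V" using UV(3,4) by auto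
  moreover have "X closure_of (h ` U) \<inter> X closure_of (h ` V) \<subseteq> X closure_of W'"
  proof -
    have "X closure_of (h ` U) \<inter> X closure_of (h ` V)
          = h ` (X closure_of U) \<inter> h ` (X closure_of V)"
      by (simp only: homeomorphic_map_closure_of[OF h Us(1)] homeomorphic_map_closure_of[OF h Us(2)])
    also have "\<dots> = h ` (X closure_of U \<inter> X closure_of V)"
      by (rule inj_on_image_Int[symmetric, OF inj closure_of_subset_topspace closure_of_subset_topspace])
    also have "\<dots> \<subseteq> h ` (X closure_of W)" using UV(5) by blast
    also have "\<dots> = X closure_of (h ` W)"
      by (rule homeomorphic_map_closure_of[OF h Us(3), symmetric])
    also have "\<dots> \<subseteq> X closure_of W'"
      by (rule closure_of_mono) (auto simp: W_def)
    finally show ?thesis .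
  qed
  ultimately show "\<exists>U V. openin X U \<and> openin X V \<and> h x \<in> U \<and> h y \<in> V \<and>
        X closure_of U \<inter> X closure_of V \<subseteq> X closure_of W'" by blast
qed



lemma prime_not_dvd_coprime:
  fixes a d q :: nat
  assumes "coprime a d" "prime q" "q dvd d"
  shows "\<not> q dvd a"
  using assms by (meson coprime_common_divisor not_prime_unit)

lemma odd_prime_ne2:
  fixes q :: nat
  assumes "prime q" "q \<noteq> 2"
  shows "odd q"
proof -
  have "q \<ge> 2" using assms(1) prime_ge_2_nat by blast
  then have "q > 2" using assms(2) by linarith
  then show ?thesis using prime_odd_nat assms(1) by blast
qed

lemma Good_imp_Rel:
  assumes x0: "0 < x" and y0: "0 < y" and G: "Good x y"
  shows "Rel kirch_topology x y"
  unfolding Rel_def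
proof (intro allI impI)
  fix W assume W: "openin kirch_topology W \<and> W \<noteq> {}"
  then obtain z where z: "z \<in> W" by blast
  obtain d where d: "d > 0" "coprime z d" "squarefree d" "arith_prog z d \<subseteq> W"
    using open_nbhd W z by blast
  define e where "e = (if even d then d div 2 else d)"
  have de: "d = (if even d then 2 * e else e)" unfolding e_def by auto
  have e0: "e > 0" using d(1) unfolding e_def by auto
  have oe: "odd e"
  proof
    assume ee: "even e"
    show False
    proof (cases "even d")
      case True
      then have "d = 2 * e" using de by simp
      then have "2^2 dvd d" using ee by auto
      then have "(2::nat) dvd 1" using squarefreeD[OF d(3)] by blast
      then show False by simp
    next
      case False then show False using ee e_def by simp
    qed
  qed
  have edvd: "e dvd d" using de by (cases "even d") auto
  have sqe: "squarefree e" using squarefree_mono[OF edvd d(3)] .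
  have cop: "coprime v e" if "0 < v" "\<And>r. prime r \<Longrightarrow> odd r \<Longrightarrow> \<not> r dvd v" for v
  proof (rule coprime_by_primes)
    fix p :: nat assume p: "prime p" "p dvd v" "p dvd e"
    then have "odd p" using oe dvd_trans by blast
    then show False using that p by blast
  qed
  have cxe: "coprime x e" using cop[OF x0] G unfolding Good_def by blast
  have cye: "coprime y e" using cop[OF y0] G unfolding Good_def by blast
  have Uo: "openin kirch_topology (arith_prog x e)" using arith_prog_open x0 e0 cxe sqe by blast
  have Vo: "openin kirch_topology (arith_prog y e)" using arith_prog_open y0 e0 cye sqe by blast
  have xU: "x \<in> arith_prog x e" unfolding arith_prog_def by force
  have yV: "y \<in> arith_prog y e" unfolding arith_prog_def by force
  have "kirch_topology closure_of (arith_prog x e) \<inter> kirch_topology closure_of (arith_prog y e)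
        \<subseteq> kirch_topology closure_of W"
  proof
    fix w assume w: "w \<in> kirch_topology closure_of (arith_prog x e) \<inter>
                        kirch_topology closure_of (arith_prog y e)"
    have w0: "0 < w" using w closure_of_subset_topspace topspace_kirch by fastforce
    have "w \<in> kirch_topology closure_of (arith_prog z d)"
    proof (rule closure_C2[OF w0 d(1) d(3)])
      fix q :: nat assume q: "prime q" "q dvd d"
      show "q dvd w \<or> w mod q = z mod q"
      proof (cases "q = 2")
        case True
        then have "odd z" using prime_not_dvd_coprime[OF d(2) q] by simp
        then show ?thesis using True by (cases "even w") (auto simp: odd_iff_mod_2_eq_one)
      next
        case False
        have "q dvd e"
        proof (cases "even d")
          case True
          then have "q dvd 2 * e" using de q(2) by simp
          then have "q dvd 2 \<or> q dvd e" using q(1) prime_dvd_mult_iff by blast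
          moreover have "\<not> q dvd 2" using False q(1) primes_dvd_imp_eq[OF q(1) two_is_prime_nat] by blast
          ultimately show ?thesis by blast
        next
          case False
          then show ?thesis using de q(2) by simp
        qed
        have c1: "q dvd w \<or> w mod q = x mod q" using closure_C1[OF _ q(1) \<open>q dvd e\<close>] w by blast
        have c2: "q dvd w \<or> w mod q = y mod q" using closure_C1[OF _ q(1) \<open>q dvd e\<close>] w by blast
        show ?thesis
        proof (rule ccontr)
          assume "\<not> (q dvd w \<or> w mod q = z mod q)"
          then have "x mod q = y mod q" using c1 c2 by auto
          then have "int q dvd (int x - int y)" using mod_eq_int_dvd by blast
          moreover have "odd q" using odd_prime_ne2 q(1) False by blast
          ultimately show False using G q(1) unfolding Good_def by blast
        qed
      qed
    qed
    then show "w \<in> kirch_topology closure_of W" using closure_of_mono[OF d(4)] by blast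
  qed
  then show "\<exists>U V. openin kirch_topology U \<and> openin kirch_topology V \<and> x \<in> U \<and> y \<in> V \<and>
        kirch_topology closure_of U \<inter> kirch_topology closure_of V \<subseteq> kirch_topology closure_of W"
    using Uo Vo xU yV by blast
qed



lemma sqf_prime_div:
  fixes b r :: nat
  assumes "squarefree b" "prime r"
  defines "b' \<equiv> (if r dvd b then b div r else b)"
  shows "\<not> r dvd b'" "\<And>q. prime q \<Longrightarrow> q dvd b \<Longrightarrow> q \<noteq> r \<Longrightarrow> q dvd b'"
proof -
  show "\<not> r dvd b'"
  proof
    assume rb: "r dvd b'"
    show False
    proof (cases "r dvd b")
      case True
      then have "b = r * b'" unfolding b'_def by simp
      then have "r^2 dvd b" using rb by (auto simp: power2_eq_square)
      then have "r dvd 1" using squarefreeD[OF assms(1)] by blast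
      then show False using assms(2) by simp
    next
      case False
      then show False using rb unfolding b'_def by simp
    qed
  qed
  fix q :: nat assume q: "prime q" "q dvd b" "q \<noteq> r"
  show "q dvd b'"
  proof (cases "r dvd b")
    case True
    then have "b = r * b'" unfolding b'_def by simp
    then have "q dvd r \<or> q dvd b'" using q prime_dvd_mult_iff by metis
    moreover have "\<not> q dvd r" using primes_dvd_imp_eq[OF q(1) assms(2)] q(3) by blast
    ultimately show ?thesis by blast
  next
    case False
    then show ?thesis using q unfolding b'_def by simp
  qed
qed

lemma Rel_imp_Good:
  assumes x0: "0 < x" and y0: "0 < y" and R: "Rel kirch_topology x y"
  shows "Good x y"
proof (rule ccontr)
  assume "\<not> Good x y"
  then obtain r where r: "prime r" "odd r" "r dvd x \<or> r dvd y \<or> int r dvd (int x - int y)"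
    unfolding Good_def by blast
  have r3: "r \<ge> 3"
  proof -
    have "r \<ge> 2" using r(1) prime_ge_2_nat by blast
    moreover have "r \<noteq> 2" using r(2) by auto
    ultimately show ?thesis by linarith
  qed
  have KEY: "x mod r = 0 \<or> y mod r = 0 \<or> x mod r = y mod r"
    using r(3) mod_eq_int_dvd[of x r y] by auto
  define z where "z = (if x mod r \<noteq> 1 \<and> y mod r \<noteq> 1 then 1 else (2::nat))"
  have z0: "0 < z" and zr: "z < r" unfolding z_def using r3 by auto
  have zx: "x mod r \<noteq> z" and zy: "y mod r \<noteq> z" using KEY unfolding z_def by auto
  have zmod: "z mod r = z" using zr by simp
  have cz: "coprime z r"
  proof -
    have "\<not> r dvd z" using z0 zr by (auto dest: dvd_imp_le)
    then show ?thesis using r(1) prime_imp_coprime coprime_commute by blast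
  qed
  have Wo: "openin kirch_topology (arith_prog z r)"
    using arith_prog_open z0 prime_gt_0_nat[OF r(1)] cz squarefree_prime[OF r(1)] by blast
  have "z \<in> arith_prog z r" unfolding arith_prog_def by force
  then have Wne: "arith_prog z r \<noteq> {}" by blast
  obtain U V where UV: "openin kirch_topology U" "openin kirch_topology V" "x \<in> U" "y \<in> V"
      "kirch_topology closure_of U \<inter> kirch_topology closure_of V
         \<subseteq> kirch_topology closure_of (arith_prog z r)"
    using R Wo Wne unfolding Rel_def by (elim allE[of _ "arith_prog z r"]) blast
  obtain b where b: "b > 0" "coprime x b" "squarefree b" "arith_prog x b \<subseteq> U"
    using open_nbhd UV(1,3) by blast
  obtain c where c: "c > 0" "coprime y c" "squarefree c" "arith_prog y c \<subseteq> V"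
    using open_nbhd UV(2,4) by blast
  define b' where "b' = (if r dvd b then b div r else b)"
  define c' where "c' = (if r dvd c then c div r else c)"
  have nb: "\<not> r dvd b'" and bq: "\<And>q. prime q \<Longrightarrow> q dvd b \<Longrightarrow> q \<noteq> r \<Longrightarrow> q dvd b'"
    using sqf_prime_div[OF b(3) r(1)] unfolding b'_def by blast+
  have nc: "\<not> r dvd c'" and cq: "\<And>q. prime q \<Longrightarrow> q dvd c \<Longrightarrow> q \<noteq> r \<Longrightarrow> q dvd c'"
    using sqf_prime_div[OF c(3) r(1)] unfolding c'_def by blast+
  define M where "M = b' * c'"
  have nM: "\<not> r dvd M" unfolding M_def using nb nc r(1) prime_dvd_mult_iff by blast
  then have M0: "M \<noteq> 0" by (metis dvd_0_right)
  have cM: "coprime M r" using nM r(1) prime_imp_coprime coprime_commute by blast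
  define t where "t = (if r dvd b then x mod r else if r dvd c then y mod r else 3 - z)"
  have t: "t < r" "t \<noteq> 0" "t \<noteq> z"
  proof -
    have "t < r \<and> t \<noteq> 0 \<and> t \<noteq> z"
    proof (cases "r dvd b")
      case True
      then have "\<not> r dvd x" using prime_not_dvd_coprime[OF b(2) r(1)] by blast
      then show ?thesis using True zx r3 unfolding t_def by (auto simp: dvd_eq_mod_eq_0)
    next
      case F1: False
      show ?thesis
      proof (cases "r dvd c")
        case True
        then have "\<not> r dvd y" using prime_not_dvd_coprime[OF c(2) r(1)] by blast
        then show ?thesis using True F1 zy r3 unfolding t_def by (auto simp: dvd_eq_mod_eq_0)
      next
        case False
        then show ?thesis using F1 r3 unfolding t_def z_def by auto
      qed
    qed
    then show "t < r" "t \<noteq> 0" "t \<noteq> z" by auto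
  qed
  obtain s u where su: "M * s = r * u + gcd M r" using bezout_nat[OF M0] by blast
  have g1: "gcd M r = 1" using cM by (simp add: coprime_iff_gcd_eq_1)
  define w where "w = M * (s * t)"
  have "w = r * (u * t) + t" unfolding w_def using su g1
    by (metis add_mult_distrib mult.assoc mult_1)
  then have wmod: "w mod r = t" using t(1) by simp
  have w0: "0 < w" using wmod t(2) by (cases "w = 0") auto
  have Mw: "M dvd w" unfolding w_def by simp
  have wb: "w \<in> kirch_topology closure_of (arith_prog x b)"
  proof (rule closure_C2[OF w0 b(1) b(3)])
    fix q :: nat assume q: "prime q" "q dvd b"
    show "q dvd w \<or> w mod q = x mod q"
    proof (cases "q = r")
      case True
      then show ?thesis using q(2) wmod unfolding t_def by simp
    next
      case False
      then have "q dvd M" using bq[OF q False] unfolding M_def by simp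
      then show ?thesis using Mw dvd_trans by blast
    qed
  qed
  have wc: "w \<in> kirch_topology closure_of (arith_prog y c)"
  proof (rule closure_C2[OF w0 c(1) c(3)])
    fix q :: nat assume q: "prime q" "q dvd c"
    show "q dvd w \<or> w mod q = y mod q"
    proof (cases "q = r")
      case True
      show ?thesis
      proof (cases "r dvd b")
        case rb: True
        have "\<not> r dvd x" using prime_not_dvd_coprime[OF b(2) r(1) rb] .
        moreover have "\<not> r dvd y" using prime_not_dvd_coprime[OF c(2) r(1)] q(2) True by blast
        ultimately have "x mod r = y mod r" using KEY by (auto simp: dvd_eq_mod_eq_0)
        then show ?thesis using True wmod rb unfolding t_def by simp
      next
        case False
        then show ?thesis using True q(2) wmod unfolding t_def by simp
      qed
    next
      case False
      then have "q dvd M" using cq[OF q False] unfolding M_def by simp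
      then show ?thesis using Mw dvd_trans by blast
    qed
  qed
  have "w \<in> kirch_topology closure_of U" using wb closure_of_mono[OF b(4)] by blast
  moreover have "w \<in> kirch_topology closure_of V" using wc closure_of_mono[OF c(4)] by blast
  ultimately have "w \<in> kirch_topology closure_of (arith_prog z r)" using UV(5) by blast
  then have "r dvd w \<or> w mod r = z mod r" using closure_C1 r(1) dvd_refl by blast
  then show False using wmod t zmod by (auto simp: dvd_eq_mod_eq_0)
qed



lemma pow2:
  fixes n :: nat
  assumes "0 < n" "\<And>r. prime r \<Longrightarrow> odd r \<Longrightarrow> \<not> r dvd n"
  shows "\<exists>k. n = 2 ^ k"
  using assms
proof (induction n rule: less_induct)
  case (less n)
  show ?case
  proof (cases "n = 1")
    case True
    then show ?thesis by (intro exI[of _ 0]) simp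
  next
    case n1: False
    show ?thesis
    proof (cases "even n")
      case True
      then obtain m where m: "n = 2 * m" by blast
      then have "0 < m" "m < n" using less.prems(1) by auto
      moreover have "\<And>r. prime r \<Longrightarrow> odd r \<Longrightarrow> \<not> r dvd m"
        using less.prems(2) m by (metis dvd_mult)
      ultimately obtain k where "m = 2 ^ k" using less.IH by blast
      then show ?thesis using m by (intro exI[of _ "Suc k"]) simp
    next
      case False
      obtain p where p: "prime p" "p dvd n" using prime_factor_nat n1 by blast
      then have "odd p" using False dvd_trans by blast
      then show ?thesis using less.prems(2) p by blast
    qed
  qed
qed

lemma odd1:
  fixes n :: nat
  assumes "0 < n" "odd n" "\<And>r. prime r \<Longrightarrow> odd r \<Longrightarrow> \<not> r dvd n"
  shows "n = 1"
proof -
  obtain k where k: "n = 2 ^ k" using pow2 assms(1,3) by blast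
  then have "k = 0" using assms(2) by (cases k) auto
  then show ?thesis using k by simp
qed

lemma Good_sym: "Good x y \<Longrightarrow> Good y x"
  unfolding Good_def by (metis dvd_minus_iff minus_diff_eq)

lemma GoodPow: "0 < u \<Longrightarrow> Good u y \<Longrightarrow> \<exists>k. u = 2 ^ k"
  unfolding Good_def using pow2 by blast

lemma odd_prime_not_dvd_pow2:
  fixes r :: nat
  assumes "prime r" "odd r"
  shows "\<not> r dvd 2 ^ k"
proof
  assume "r dvd 2 ^ k"
  then have "r dvd 2" using assms(1) prime_dvd_power by blast
  then have "r = 2" using primes_dvd_imp_eq[OF assms(1) two_is_prime_nat] by blast
  then show False using assms(2) by simp
qed

lemma G3: "Good (2 ^ n) (2 ^ Suc n)"
  unfolding Good_def
proof (intro allI impI conjI)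
  fix r :: nat assume r: "prime r \<and> odd r"
  show "\<not> r dvd 2 ^ n" "\<not> r dvd 2 ^ Suc n" using odd_prime_not_dvd_pow2 r by blast+
  show "\<not> int r dvd int (2 ^ n) - int (2 ^ Suc n)"
  proof
    assume "int r dvd int (2 ^ n) - int (2 ^ Suc n)"
    moreover have "int (2 ^ n) - int (2 ^ Suc n) = - int (2 ^ n)" by simp
    ultimately have "int r dvd int (2 ^ n)" by simp
    then have "r dvd 2 ^ n" by (simp only: of_nat_dvd_iff)
    then show False using odd_prime_not_dvd_pow2 r by blast
  qed
qed

lemma G2:
  assumes "0 < y" "Good (2 ^ n) y"
  shows "y = 2 ^ Suc n \<or> (0 < n \<and> y = 2 ^ (n - 1))"
proof -
  have G: "\<And>r. prime r \<Longrightarrow> odd r \<Longrightarrow> \<not> r dvd y \<and> \<not> int r dvd (int (2 ^ n) - int y)"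
    using assms(2) unfolding Good_def by blast
  then obtain m where m: "y = 2 ^ m" using pow2 assms(1) by blast
  have p3: "prime (3::nat)" by simp
  have "m \<noteq> n"
  proof
    assume "m = n"
    then have "int 3 dvd (int (2 ^ n) - int y)" using m by simp
    then show False using G[OF p3] by simp
  qed
  show ?thesis
  proof (cases "n < m")
    case True
    define q :: nat where "q = 2 ^ (m - n) - 1"
    have qpos: "0 < q" unfolding q_def using True one_less_power[of "2::nat" "m - n"] by simp
    have qodd: "odd q" unfolding q_def using True by simp
    have eq: "int (2 ^ n) - int y = - (int (2 ^ n) * int q)"
    proof -
      have "(2::nat) ^ m = 2 ^ n * 2 ^ (m - n)" using True by (metis le_add_diff_inverse less_imp_le power_add)
      moreover have "(2::nat) ^ (m - n) = q + 1" unfolding q_def by simp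
      ultimately have "y = 2 ^ n * (q + 1)" using m by simp
      then show ?thesis by (simp add: algebra_simps)
    qed
    have "\<And>r. prime r \<Longrightarrow> odd r \<Longrightarrow> \<not> r dvd q"
    proof
      fix r :: nat assume r: "prime r" "odd r" "r dvd q"
      then have "int r dvd int q" by simp
      then have "int r dvd (int (2 ^ n) - int y)" unfolding eq by simp
      then show False using G r by blast
    qed
    then have "q = 1" using odd1 qpos qodd by blast
    then have "(2::nat) ^ (m - n) = 2 ^ 1" unfolding q_def
      by (metis diff_add_inverse2 le_add_diff_inverse nat_1_add_1 one_le_numeral one_le_power power_one_right)
    then have "m - n = 1" using power_inject_exp by (metis one_less_numeral_iff semiring_norm(76))
    then have "m = Suc n" using True by simp
    then show ?thesis using m by simp
  next
    case False
    then have mn: "m < n" using \<open>m \<noteq> n\<close> by simp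
    define q :: nat where "q = 2 ^ (n - m) - 1"
    have qpos: "0 < q" unfolding q_def using mn one_less_power[of "2::nat" "n - m"] by simp
    have qodd: "odd q" unfolding q_def using mn by simp
    have eq: "int (2 ^ n) - int y = int (2 ^ m) * int q"
    proof -
      have "(2::nat) ^ n = 2 ^ m * 2 ^ (n - m)" using mn by (metis le_add_diff_inverse less_imp_le power_add)
      moreover have "(2::nat) ^ (n - m) = q + 1" unfolding q_def by simp
      ultimately have "(2::nat) ^ n = 2 ^ m * (q + 1)" by simp
      then have "int (2 ^ n) = int (2 ^ m) * (int q + 1)" by (metis of_nat_1 of_nat_add of_nat_mult)
      then show ?thesis using m by (simp add: algebra_simps)
    qed
    have "\<And>r. prime r \<Longrightarrow> odd r \<Longrightarrow> \<not> r dvd q"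
    proof
      fix r :: nat assume r: "prime r" "odd r" "r dvd q"
      then have "int r dvd int q" by simp
      then have "int r dvd (int (2 ^ n) - int y)" unfolding eq by simp
      then show False using G r by blast
    qed
    then have "q = 1" using odd1 qpos qodd by blast
    then have "(2::nat) ^ (n - m) = 2 ^ 1" unfolding q_def
      by (metis diff_add_inverse2 le_add_diff_inverse nat_1_add_1 one_le_numeral one_le_power power_one_right)
    then have "n - m = 1" using power_inject_exp by (metis one_less_numeral_iff semiring_norm(76))
    then have "m = n - 1" "0 < n" using mn by auto
    then show ?thesis using m by simp
  qed
qed



theorem lemma3p9:
  fixes h :: "nat \<Rightarrow> nat" and n :: nat
  assumes "homeomorphic_map kirch_topology kirch_topology h"
  shows "h (2 ^ n) = 2 ^ n"
proof -
  let ?X = kirch_topology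
  have hom: "homeomorphic_map ?X ?X h" by (rule assms)
  obtain g where hg: "homeomorphic_maps ?X ?X h g" using hom homeomorphic_map_maps by blast
  have gom: "homeomorphic_map ?X ?X g" and gh: "\<And>x. x \<in> topspace ?X \<Longrightarrow> g (h x) = x"
    and hgy: "\<And>y. y \<in> topspace ?X \<Longrightarrow> h (g y) = y"
    using hg unfolding homeomorphic_maps_map by blast+
  have surjh: "h ` topspace ?X = topspace ?X" by (rule homeomorphic_imp_surjective_map[OF hom])
  have surjg: "g ` topspace ?X = topspace ?X" by (rule homeomorphic_imp_surjective_map[OF gom])
  have hpos: "0 < h x" if "0 < x" for x
  proof -
    have "h x \<in> h ` topspace ?X" using that topspace_kirch by simp
    then show ?thesis using surjh topspace_kirch by simp
  qed
  have gpos: "0 < g x" if "0 < x" for x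
  proof -
    have "g x \<in> g ` topspace ?X" using that topspace_kirch by simp
    then show ?thesis using surjg topspace_kirch by simp
  qed
  have inj: "inj_on h (topspace ?X)" by (rule homeomorphic_imp_injective_map[OF hom])
  have RG: "Rel ?X x y \<longleftrightarrow> Good x y" if "0 < x" "0 < y" for x y
    using Rel_imp_Good Good_imp_Rel that by blast
  have HG: "Good (h x) (h y)" if "0 < x" "0 < y" "Good x y" for x y
  proof -
    have "Rel ?X x y" using RG that by blast
    then have "Rel ?X (h x) (h y)" using Rel_hom[OF hom] that topspace_kirch by simp
    then show ?thesis using RG hpos that by blast
  qed
  have GG: "Good x y" if "0 < x" "0 < y" "Good (h x) (h y)" for x y
  proof -
    have "Rel ?X (h x) (h y)" using RG hpos that by blast
    then have "Rel ?X (g (h x)) (g (h y))" using Rel_hom[OF gom] hpos that topspace_kirch by simp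
    then have "Rel ?X x y" using gh that topspace_kirch by simp
    then show ?thesis using RG that by blast
  qed
  have h1: "h 1 = 1"
  proof -
    have "Good (h 1) (h 2)" using HG G3[of 0] by simp
    then obtain k where k: "h 1 = 2 ^ k" using GoodPow hpos by (metis zero_less_one)
    have nb: "g y = 2" if "0 < y" "Good (h 1) y" for y
    proof -
      have "h (g y) = y" using hgy that topspace_kirch by simp
      then have "Good (h 1) (h (g y))" using that by simp
      then have "Good 1 (g y)" using GG gpos that by simp
      then show ?thesis using G2[of "g y" 0] gpos that by simp
    qed
    show ?thesis
    proof (cases k)
      case 0 then show ?thesis using k by simp
    next
      case (Suc j)
      have "Good (h 1) (2 ^ Suc k)" using k G3[of k] by simp
      then have a: "g (2 ^ Suc k) = 2" using nb by simp
      have "Good (h 1) (2 ^ j)" using k Suc G3[of j] Good_sym by simp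
      then have b: "g (2 ^ j) = 2" using nb by simp
      have "h (g (2 ^ Suc k)) = 2 ^ Suc k" "h (g (2 ^ j)) = 2 ^ j"
        using hgy topspace_kirch by simp_all
      then have "(2::nat) ^ Suc k = 2 ^ j" using a b by simp
      then show ?thesis using Suc by simp
    qed
  qed
  have h2: "h 2 = 2"
  proof -
    have "Good (h 1) (h 2)" using HG G3[of 0] by simp
    then have "Good (2 ^ 0) (h 2)" using h1 by simp
    then show ?thesis using G2[of "h 2" 0] hpos by simp
  qed
  have P: "h (2 ^ m) = 2 ^ m \<and> h (2 ^ Suc m) = 2 ^ Suc m" for m
  proof (induction m)
    case 0 then show ?case using h1 h2 by simp
  next
    case (Suc m)
    then have e1: "h (2 ^ Suc m) = 2 ^ Suc m" and e0: "h (2 ^ m) = 2 ^ m" by simp_all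
    have "Good (h (2 ^ Suc m)) (h (2 ^ Suc (Suc m)))" using HG G3[of "Suc m"] by simp
    then have "Good (2 ^ Suc m) (h (2 ^ Suc (Suc m)))" using e1 by simp
    then have "h (2 ^ Suc (Suc m)) = 2 ^ Suc (Suc m) \<or> h (2 ^ Suc (Suc m)) = 2 ^ m"
      using G2[of "h (2 ^ Suc (Suc m))" "Suc m"] hpos by simp
    moreover have "h (2 ^ Suc (Suc m)) \<noteq> 2 ^ m"
    proof
      assume "h (2 ^ Suc (Suc m)) = 2 ^ m"
      then have "h (2 ^ Suc (Suc m)) = h (2 ^ m)" using e0 by simp
      then have "(2::nat) ^ Suc (Suc m) = 2 ^ m"
        using inj topspace_kirch unfolding inj_on_def by simp
      then show False by simp
    qed
    ultimately show ?case using e1 by simp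
  qed
  then show ?thesis by blast
qed

end
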